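(* Let $L=\langle S,A,\to\rangle$ be a labelled transition system and $x,y\in\{o,b\}$. Then $(x,y)$-generic bisimilarity $\mathrel{\underline{\leftrightarrow}}_{(x,y)}$ is an equivalence relation on $S$.
   Context: An LTS is $\langle S,A,\to\rangle$ with states $S$, actions $A$ containing the internal action $\tau$, and $\to\subseteq S\times A\times S$; write $s\xrightarrow{a}t$, and $\twoheadrightarrow$ for the reflexive-transitive closure of $\xrightarrow{\tau}$. For $R\subseteq S\times S$ and $s,s',t$: $s\twoheadrightarrow_{o,R,t}s'$ iff $s\twoheadrightarrow s'$; $s\twoheadrightarrow_{b,R,t}s'$ iff $s\twoheadrightarrow s'$, $t\,R\,s$ and $t\,R\,s'$. For $x,y\in\{o,b\}$, a symmetric $R$ is an $(x,y)$-generic bisimulation if whenever $s\,R\,t$ and $s\xrightarrow{a}s'$, either $a=\tau$ and $s'\,R\,t$, or there exist $t',t_1,t_2$ with $t\twoheadrightarrow_{x,R,s}t_1\xrightarrow{a}t_2\twoheadrightarrow_{y,R,s'}t'$ and $s'\,R\,t'$. $s\mathrel{\underline{\leftrightarrow}}_{(x,y)}t$ iff some $(x,y)$-generic bisimulation relates $s$ and $t$. *)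

theory Defs
  imports Main
begin

datatype mode = Mo | Mb

definition tau_steps :: "('s \<Rightarrow> 'a \<Rightarrow> 's \<Rightarrow> bool) \<Rightarrow> 'a \<Rightarrow> 's \<Rightarrow> 's \<Rightarrow> bool" where
  "tau_steps tr tau = (\<lambda>s s'. tr s tau s')\<^sup>*\<^sup>*"

fun mstep :: "('s \<Rightarrow> 'a \<Rightarrow> 's \<Rightarrow> bool) \<Rightarrow> 'a \<Rightarrow> mode \<Rightarrow> ('s \<Rightarrow> 's \<Rightarrow> bool) \<Rightarrow> 's \<Rightarrow> 's \<Rightarrow> 's \<Rightarrow> bool" where
  "mstep tr tau Mo R t s s' = tau_steps tr tau s s'"
| "mstep tr tau Mb R t s s' = (tau_steps tr tau s s' \<and> R t s \<and> R t s')"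

definition generic_bisim :: "('s \<Rightarrow> 'a \<Rightarrow> 's \<Rightarrow> bool) \<Rightarrow> 'a \<Rightarrow> mode \<Rightarrow> mode \<Rightarrow> ('s \<Rightarrow> 's \<Rightarrow> bool) \<Rightarrow> bool" where
  "generic_bisim tr tau x y R \<longleftrightarrow>
     symp R \<and>
     (\<forall>s t a s'. R s t \<and> tr s a s' \<longrightarrow>
        (a = tau \<and> R s' t) \<or>
        (\<exists>t' t1 t2. mstep tr tau x R s t t1 \<and> tr t1 a t2 \<and> mstep tr tau y R s' t2 t' \<and> R s' t'))"

definition generic_bisimilar :: "('s \<Rightarrow> 'a \<Rightarrow> 's \<Rightarrow> bool) \<Rightarrow> 'a \<Rightarrow> mode \<Rightarrow> mode \<Rightarrow> 's \<Rightarrow> 's \<Rightarrow> bool" where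
  "generic_bisimilar tr tau x y s t \<longleftrightarrow> (\<exists>R. generic_bisim tr tau x y R \<and> R s t)"

end

theory Submission
  imports Defs
begin

definition semi :: "('s \<Rightarrow> 'a \<Rightarrow> 's \<Rightarrow> bool) \<Rightarrow> 'a \<Rightarrow> mode \<Rightarrow> mode \<Rightarrow> ('s \<Rightarrow> 's \<Rightarrow> bool) \<Rightarrow> bool" where
  "semi tr tau x y R \<longleftrightarrow>
     symp R \<and>
     (\<forall>s t a s'. R s t \<and> tr s a s' \<longrightarrow>
        (a = tau \<and> (\<exists>t1. mstep tr tau x R s t t1 \<and> R s' t1)) \<or>
        (\<exists>t' t1 t2. mstep tr tau x R s t t1 \<and> tr t1 a t2 \<and> mstep tr tau y R s' t2 t' \<and> R s' t'))"

lemma mstep_tau: "mstep tr tau m R s t t1 \<Longrightarrow> tau_steps tr tau t t1"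
  by (cases m) auto

lemma mstep_Mb: "mstep tr tau m R s t t1 \<Longrightarrow> m = Mb \<Longrightarrow> R s t \<and> R s t1"
  by auto

lemma mstep_intro: "tau_steps tr tau t t1 \<Longrightarrow> (m = Mb \<Longrightarrow> R s t \<and> R s t1) \<Longrightarrow> mstep tr tau m R s t t1"
  by (cases m) auto

lemma mstep_mono: "mstep tr tau m R s t t1 \<Longrightarrow> (\<And>a b. R a b \<Longrightarrow> R' a b) \<Longrightarrow> mstep tr tau m R' s t t1"
  by (cases m) auto

lemma tau_trans: "tau_steps tr tau a b \<Longrightarrow> tau_steps tr tau b c \<Longrightarrow> tau_steps tr tau a c"
  unfolding tau_steps_def by auto

lemma tau_refl: "tau_steps tr tau a a"
  unfolding tau_steps_def by auto

lemma tau_step: "tr a tau b \<Longrightarrow> tau_steps tr tau a b"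
  unfolding tau_steps_def by auto

lemma semiE[consumes 3, case_names deg step]:
  assumes "semi tr tau x y R" "R s t" "tr s a s'"
  obtains (deg) t1 where "a = tau" "mstep tr tau x R s t t1" "R s' t1"
  | (step) t' t1 t2 where "mstep tr tau x R s t t1" "tr t1 a t2" "mstep tr tau y R s' t2 t'" "R s' t'"
  using assms unfolding semi_def by blast

lemma semi_sym: "semi tr tau x y R \<Longrightarrow> R a b \<Longrightarrow> R b a"
  unfolding semi_def by (meson sympD)

lemma transfer:
  assumes "semi tr tau x y S" "tau_steps tr tau u u'" "S u t"
  shows "\<exists>t'. tau_steps tr tau t t' \<and> S u' t'"
  using assms(2,3) unfolding tau_steps_def
proof (induction rule: rtranclp_induct)
  case base then show ?case by auto
next
  case (step v v')
  then obtain t1 where t1: "(\<lambda>s s'. tr s tau s')\<^sup>*\<^sup>* t t1" "S v t1" by auto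
  show ?case
  using assms(1) t1(2) step.hyps(2) proof (cases rule: semiE)
    case (deg t2)
    then show ?thesis using t1 mstep_tau[OF deg(2)] unfolding tau_steps_def by (meson rtranclp_trans)
  next
    case (step t' ta tb)
    have "tau_steps tr tau t t'"
      using tau_trans[OF tau_trans[OF tau_trans[OF t1(1)[folded tau_steps_def] mstep_tau[OF step(1)]] tau_step[of tr ta tau tb, OF step(2)]] mstep_tau[OF step(3)]] .
    then show ?thesis using step(4) unfolding tau_steps_def by auto
  qed
qed

lemma semi_comp:
  assumes R: "semi tr tau x y R"
  shows "semi tr tau x y (R OO R)"
  unfolding semi_def
proof (intro conjI allI impI)
  show "symp (R OO R)" using semi_sym[OF R] by (auto intro!: sympI)
next
  fix s t a s'
  assume "(R OO R) s t \<and> tr s a s'"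
  then obtain u where su: "R s u" and ut: "R u t" and tr: "tr s a s'" by auto
  let ?Q = "R OO R"
  let ?G = "(a = tau \<and> (\<exists>t1. mstep tr tau x ?Q s t t1 \<and> ?Q s' t1)) \<or>
        (\<exists>t' t1 t2. mstep tr tau x ?Q s t t1 \<and> tr t1 a t2 \<and> mstep tr tau y ?Q s' t2 t' \<and> ?Q s' t')"
  show ?G
  using R su tr proof (cases rule: semiE)
    case (deg u1)
    obtain t1 where t1: "tau_steps tr tau t t1" "R u1 t1"
      using transfer[OF R mstep_tau[OF deg(2)] ut] by auto
    have "mstep tr tau x ?Q s t t1"
      by (rule mstep_intro[OF t1(1)]) (use su ut mstep_Mb[OF deg(2)] t1(2) in blast)
    moreover have "?Q s' t1" using deg(3) t1(2) by blast
    ultimately show ?thesis using deg(1) by blast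
  next
    case (step u' u1 u2)
    obtain t1 where t1: "tau_steps tr tau t t1" "R u1 t1"
      using transfer[OF R mstep_tau[OF step(1)] ut] by auto
    show ?thesis
    using R t1(2) step(2) proof (cases rule: semiE)
      case (deg t1a)
      have tt1a: "tau_steps tr tau t t1a" using t1(1) mstep_tau[OF deg(2)] tau_trans by metis
      have x1: "mstep tr tau x ?Q s t t1a"
        by (rule mstep_intro[OF tt1a]) (use su ut mstep_Mb[OF step(1)] mstep_Mb[OF deg(2)] in blast)
      show ?thesis
      proof (cases y)
        case Mb
        have "?Q s' t1a" using mstep_Mb[OF step(3) Mb] deg(3) by blast
        then show ?thesis using x1 deg(1) by blast
      next
        case Mo
        obtain t'' where t'': "tau_steps tr tau t1a t''" "R u' t''"
          using transfer[OF R mstep_tau[OF step(3)] deg(3)] by auto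
        have q: "?Q s' t''" using step(4) t''(2) by blast
        from t''(1)[unfolded tau_steps_def] show ?thesis
        proof (cases rule: converse_rtranclpE)
          case base then show ?thesis using x1 q deg(1) by blast
        next
          case (step ty)
          have "mstep tr tau y ?Q s' ty t''" using Mo step(2) by (simp add: tau_steps_def)
          then show ?thesis using x1 q deg(1) step(1) by blast
        qed
      qed
    next
      case (step t1c t1a t1b)
      obtain t'' where t'': "tau_steps tr tau t1c t''" "R u' t''"
        using transfer[OF R mstep_tau[OF \<open>mstep tr tau y R s' u2 u'\<close>] step(4)] by auto
      have tt1a: "tau_steps tr tau t t1a" using t1(1) mstep_tau[OF step(1)] tau_trans by metis
      have x1: "mstep tr tau x ?Q s t t1a"
        by (rule mstep_intro[OF tt1a]) (use su ut mstep_Mb[OF \<open>mstep tr tau x R s u u1\<close>] mstep_Mb[OF step(1)] in blast)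
      have tb: "tau_steps tr tau t1b t''" using mstep_tau[OF step(3)] t''(1) tau_trans by metis
      have q: "?Q s' t''" using \<open>R s' u'\<close> t''(2) by blast
      have y1: "mstep tr tau y ?Q s' t1b t''"
        by (rule mstep_intro[OF tb]) (use q mstep_Mb[OF \<open>mstep tr tau y R s' u2 u'\<close>] mstep_Mb[OF step(3)] in blast)
      show ?thesis using x1 step(2) y1 q by blast
    qed
  qed
qed

definition SB where "SB tr tau x y s t \<longleftrightarrow> (\<exists>R. semi tr tau x y R \<and> R s t)"

lemma semi_SB: "semi tr tau x y (SB tr tau x y)"
  unfolding semi_def
proof (intro conjI allI impI)
  show "symp (SB tr tau x y)" unfolding SB_def by (intro sympI) (metis semi_sym)
next
  fix s t a s'
  assume "SB tr tau x y s t \<and> tr s a s'"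
  then obtain R where R: "semi tr tau x y R" "R s t" and tr: "tr s a s'" unfolding SB_def by auto
  have le: "\<And>a b. R a b \<Longrightarrow> SB tr tau x y a b" using R(1) unfolding SB_def by auto
  show "(a = tau \<and> (\<exists>t1. mstep tr tau x (SB tr tau x y) s t t1 \<and> SB tr tau x y s' t1)) \<or>
        (\<exists>t' t1 t2. mstep tr tau x (SB tr tau x y) s t t1 \<and> tr t1 a t2 \<and> mstep tr tau y (SB tr tau x y) s' t2 t' \<and> SB tr tau x y s' t')"
  using R tr proof (cases rule: semiE)
    case (deg t1) then show ?thesis using mstep_mono[OF deg(2), of "SB tr tau x y", OF le] le by blast
  next
    case (step t' t1 t2) then show ?thesis using mstep_mono[OF step(1), of "SB tr tau x y", OF le] mstep_mono[OF step(3), of "SB tr tau x y", OF le] le by blast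
  qed
qed

lemma SB_le: "semi tr tau x y R \<Longrightarrow> R s t \<Longrightarrow> SB tr tau x y s t"
  unfolding SB_def by auto

lemma SB_trans: "SB tr tau x y a b \<Longrightarrow> SB tr tau x y b c \<Longrightarrow> SB tr tau x y a c"
  by (rule SB_le[OF semi_comp[OF semi_SB]]) blast

lemma SB_refl: "SB tr tau x y a a"
proof (rule SB_le[where R = "(=)"])
  show "semi tr tau x y (=)"
    unfolding semi_def
    by (auto intro!: sympI mstep_intro tau_refl)
qed simp

lemma stutter:
  assumes st: "SB tr tau x y s t" and st1: "SB tr tau x y s t1"
    and tw: "tau_steps tr tau t w" and wt1: "tau_steps tr tau w t1"
  shows "SB tr tau x y s w"
proof -
  let ?S = "SB tr tau x y"
  define P where "P = (\<lambda>a b. \<exists>t t1. ?S a t \<and> ?S a t1 \<and> tau_steps tr tau t b \<and> tau_steps tr tau b t1)"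
  define R' where "R' = (\<lambda>a b. ?S a b \<or> P a b \<or> P b a)"
  have le: "\<And>a b. ?S a b \<Longrightarrow> R' a b" unfolding R'_def by auto
  have SBs: "semi tr tau x y ?S" by (rule semi_SB)
  have "semi tr tau x y R'"
    unfolding semi_def
  proof (intro conjI allI impI)
    show "symp R'" unfolding R'_def using semi_sym[OF SBs] by (auto intro!: sympI)
  next
    fix p q a p'
    assume h: "R' p q \<and> tr p a p'"
    then have tr: "tr p a p'" by auto
    let ?G = "(a = tau \<and> (\<exists>t1. mstep tr tau x R' p q t1 \<and> R' p' t1)) \<or>
        (\<exists>t' t1 t2. mstep tr tau x R' p q t1 \<and> tr t1 a t2 \<and> mstep tr tau y R' p' t2 t' \<and> R' p' t')"
    have c1: "?G" if "?S p q"
      using SBs that tr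
    proof (cases rule: semiE)
      case (deg t2) then show ?thesis using mstep_mono[OF deg(2), of R', OF le] le by blast
    next
      case (step t' t1 t2) then show ?thesis using mstep_mono[OF step(1), of R', OF le] mstep_mono[OF step(3), of R', OF le] le by blast
    qed
    have c2: "?G" if "P p q"
    proof -
      from that obtain t t1 where h2: "?S p t" "?S p t1" "tau_steps tr tau t q" "tau_steps tr tau q t1"
        unfolding P_def by auto
      have pq: "R' p q" using that unfolding R'_def by auto
      show ?G
      using SBs h2(2) tr proof (cases rule: semiE)
        case (deg t2)
        have "mstep tr tau x R' p q t2"
          by (rule mstep_intro[OF tau_trans[OF h2(4) mstep_tau[OF deg(2)]]])
             (use pq le mstep_Mb[OF deg(2)] in blast)
        then show ?thesis using deg le by blast
      next
        case (step t' ta tb)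
        have "mstep tr tau x R' p q ta"
          by (rule mstep_intro[OF tau_trans[OF h2(4) mstep_tau[OF step(1)]]])
             (use pq le mstep_Mb[OF step(1)] in blast)
        then show ?thesis using step le mstep_mono[OF step(3), of R', OF le] by blast
      qed
    qed
    have c3: "?G" if "P q p"
    proof -
      from that obtain t t1 where h2: "?S q t" "?S q t1" "tau_steps tr tau t p" "tau_steps tr tau p t1"
        unfolding P_def by auto
      have pq: "R' p q" using that unfolding R'_def by auto
      obtain q1 where q1: "tau_steps tr tau q q1" "?S p q1"
        using transfer[OF SBs h2(3) semi_sym[OF SBs h2(1)]] by auto
      show ?G
      using SBs q1(2) tr proof (cases rule: semiE)
        case (deg t2)
        have "mstep tr tau x R' p q t2"
          by (rule mstep_intro[OF tau_trans[OF q1(1) mstep_tau[OF deg(2)]]])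
             (use pq le mstep_Mb[OF deg(2)] in blast)
        then show ?thesis using deg le by blast
      next
        case (step t' ta tb)
        have "mstep tr tau x R' p q ta"
          by (rule mstep_intro[OF tau_trans[OF q1(1) mstep_tau[OF step(1)]]])
             (use pq le mstep_Mb[OF step(1)] in blast)
        then show ?thesis using step le mstep_mono[OF step(3), of R', OF le] by blast
      qed
    qed
    from h have "?S p q \<or> P p q \<or> P q p" unfolding R'_def by simp
    then show ?G
    proof (elim disjE)
      assume "?S p q" then show ?G by (rule c1)
    next
      assume "P p q" then show ?G by (rule c2)
    next
      assume "P q p" then show ?G by (rule c3)
    qed
  qed
  moreover have "R' s w" unfolding R'_def P_def using assms by blast
  ultimately show ?thesis by (rule SB_le)
qed

lemma SB_generic: "generic_bisim tr tau x y (SB tr tau x y)"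
  unfolding generic_bisim_def
proof (intro conjI allI impI)
  show "symp (SB tr tau x y)" by (intro sympI) (rule semi_sym[OF semi_SB])
next
  fix s t a s'
  assume h: "SB tr tau x y s t \<and> tr s a s'"
  let ?S = "SB tr tau x y"
  have "\<exists>c. (a = tau \<and> mstep tr tau x ?S s t c \<and> ?S s' c) \<or>
     (\<exists>t' t1 t2. mstep tr tau x ?S s t t1 \<and> tr t1 a t2 \<and> mstep tr tau y ?S s' t2 t' \<and> ?S s' t')"
    using semi_SB conjunct1[OF h] conjunct2[OF h]
  proof (cases rule: semiE)
    case (deg t1) then show ?thesis by blast
  next
    case (step t' t1 t2) then show ?thesis by blast
  qed
  then obtain c where
    "(a = tau \<and> mstep tr tau x ?S s t c \<and> ?S s' c) \<or>
     (\<exists>t' t1 t2. mstep tr tau x ?S s t t1 \<and> tr t1 a t2 \<and> mstep tr tau y ?S s' t2 t' \<and> ?S s' t')"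
    by blast
  then show "(a = tau \<and> ?S s' t) \<or>
        (\<exists>t' t1 t2. mstep tr tau x ?S s t t1 \<and> tr t1 a t2 \<and> mstep tr tau y ?S s' t2 t' \<and> ?S s' t')"
  proof
    assume d: "a = tau \<and> mstep tr tau x ?S s t c \<and> ?S s' c"
    from mstep_tau[of tr tau x ?S s t c] d have "(\<lambda>s s'. tr s tau s')\<^sup>*\<^sup>* t c"
      by (simp add: tau_steps_def)
    then show ?thesis
    proof (cases rule: rtranclE[to_pred])
      case base then show ?thesis using d by auto
    next
      case (step ta)
      have "mstep tr tau x ?S s t ta"
      proof (rule mstep_intro)
        show "tau_steps tr tau t ta" using step(1) by (simp add: tau_steps_def)
        show "?S s t \<and> ?S s ta" if "x = Mb"
        proof -
          have Mb: "?S s t \<and> ?S s c" using mstep_Mb[of tr tau x ?S s t c] d that by blast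
          have t1: "tau_steps tr tau t ta" using step(1) by (simp add: tau_steps_def)
          have t2: "tau_steps tr tau ta c" using step(2) tau_step[of tr ta tau c] by simp
          show ?thesis using stutter[OF conjunct1[OF Mb] conjunct2[OF Mb] t1 t2] Mb by blast
        qed
      qed
      moreover have "mstep tr tau y ?S s' c c" using d by (intro mstep_intro tau_refl) auto
      ultimately show ?thesis using d step by blast
    qed
  next
    assume "\<exists>t' t1 t2. mstep tr tau x ?S s t t1 \<and> tr t1 a t2 \<and> mstep tr tau y ?S s' t2 t' \<and> ?S s' t'"
    then show ?thesis by (rule disjI2)
  qed
qed

lemma generic_semi: "generic_bisim tr tau x y R \<Longrightarrow> semi tr tau x y R"
proof -
  assume g: "generic_bisim tr tau x y R"
  show ?thesis unfolding semi_def
  proof (intro conjI allI impI)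
    show "symp R" using g unfolding generic_bisim_def by (rule conjunct1)
  next
    fix s t a s'
    assume h: "R s t \<and> tr s a s'"
    have "(a = tau \<and> R s' t) \<or>
        (\<exists>t' t1 t2. mstep tr tau x R s t t1 \<and> tr t1 a t2 \<and> mstep tr tau y R s' t2 t' \<and> R s' t')"
      using conjunct2[OF g[unfolded generic_bisim_def], rule_format, OF h] .
    moreover have "mstep tr tau x R s t t" using h by (intro mstep_intro tau_refl) auto
    ultimately show "(a = tau \<and> (\<exists>t1. mstep tr tau x R s t t1 \<and> R s' t1)) \<or>
        (\<exists>t' t1 t2. mstep tr tau x R s t t1 \<and> tr t1 a t2 \<and> mstep tr tau y R s' t2 t' \<and> R s' t')"
      by blast
  qed
qed

lemma eq_SB: "generic_bisimilar tr tau x y = SB tr tau x y"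
proof (intro ext iffI)
  fix a b assume "generic_bisimilar tr tau x y a b"
  then obtain R where "generic_bisim tr tau x y R" "R a b" unfolding generic_bisimilar_def by blast
  then show "SB tr tau x y a b" by (intro SB_le[OF generic_semi])
next
  fix a b assume "SB tr tau x y a b"
  then show "generic_bisimilar tr tau x y a b"
    unfolding generic_bisimilar_def by (intro exI[of _ "SB tr tau x y"] conjI SB_generic)
qed

theorem corollary4p7:
  fixes tr :: "'s \<Rightarrow> 'a \<Rightarrow> 's \<Rightarrow> bool" and tau :: 'a and x y :: mode
  shows "equivp (generic_bisimilar tr tau x y)"
  unfolding eq_SB
proof (rule equivpI)
  show "reflp (SB tr tau x y)" by (rule reflpI) (rule SB_refl)
  show "symp (SB tr tau x y)" by (rule sympI) (rule semi_sym[OF semi_SB])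
  show "transp (SB tr tau x y)" by (rule transpI) (rule SB_trans)
qed

end
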